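(* Let $G$ be a topological groupoid and $Z$ a topological space with a right action of $G$ (momentum map $p\colon Z\to G^{(0)}$). Consider: (i) $G$ acts properly on $Z$; (ii) $(r,s)\colon Z\rtimes G\to Z\times Z$, $(z,g)\mapsto(z,zg)$, is closed and for every $z\in Z$ the stabilizer $\{g\in G: p(z)=r(g), zg=z\}$ is quasi-compact; (iii) for all quasi-compact $K,L\subset Z$, $\{g\in G: Lg\cap K\neq\emptyset\}$ is quasi-compact; (iii)' for all compact $K,L\subset Z$, $\{g\in G: Lg\cap K\neq\emptyset\}$ is quasi-compact; (iv) for every quasi-compact $K\subset Z$, $\{g\in G: Kg\cap K\neq\emptyset\}$ is quasi-compact; (v) there is a family $(A_i)_{i\in I}$ of subsets of $Z$ with $Z=\bigcup_i\mathrm{int}(A_i)$ such that $\{g\in G: A_ig\cap A_j\neq\emptyset\}$ is relatively quasi-compact for all $i,j\in I$. Then (i)$\iff$(ii)$\implies$(iii)$\implies$(iii)' and (iii)$\implies$(iv). If $Z$ is locally compact, then (iii)'$\implies$(v) and (iv)$\implies$(v). If $G^{(0)}$ is Hausdorff and $Z$ is locally compact Hausdorff, then (i)–(v) are all equivalent.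
   Context: Quasi-compact: every open cover has a finite subcover; compact: quasi-compact Hausdorff; locally compact: every point has a compact neighbourhood. A subset is relatively quasi-compact if contained in a quasi-compact subset. A continuous map is proper if closed with quasi-compact fibres; a groupoid is proper if $(r,s)$ onto unit space squared is proper. A right action: $zg$ defined when $p(z)=r(g)$, with $p(zg)=s(g)$. $Z\rtimes G=\{(z,g)\in Z\times G: p(z)=r(g)\}$ is a groupoid with unit space $Z$, range $(z,g)\mapsto z$, source $(z,g)\mapsto zg$. The action is proper if $Z\rtimes G$ is a proper groupoid. $Lg=\{zg: z\in L, p(z)=r(g)\}$. *)

theory Defs
  imports "HOL-Analysis.Analysis"
begin

text \<open>A topological groupoid: the arrows are the points of the topological space TG;
  the unit space is a subset U of the arrows (with the subspace topology);
  r, s are range and source, m is the (partial) multiplication, defined on pairs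
  (g,h) with s g = r h, and i is the inversion.\<close>

definition composable_pairs :: "'g topology \<Rightarrow> ('g \<Rightarrow> 'g) \<Rightarrow> ('g \<Rightarrow> 'g) \<Rightarrow> ('g \<times> 'g) set" where
  "composable_pairs TG r s = {(g, h). g \<in> topspace TG \<and> h \<in> topspace TG \<and> s g = r h}"

definition topological_groupoid ::
  "'g topology \<Rightarrow> 'g set \<Rightarrow> ('g \<Rightarrow> 'g) \<Rightarrow> ('g \<Rightarrow> 'g) \<Rightarrow> ('g \<Rightarrow> 'g \<Rightarrow> 'g) \<Rightarrow> ('g \<Rightarrow> 'g) \<Rightarrow> bool" where
  "topological_groupoid TG U r s m i \<longleftrightarrow>
     U \<subseteq> topspace TG \<and>
     (\<forall>g \<in> topspace TG. r g \<in> U \<and> s g \<in> U) \<and>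
     (\<forall>u \<in> U. r u = u \<and> s u = u) \<and>
     (\<forall>g \<in> topspace TG. \<forall>h \<in> topspace TG. s g = r h \<longrightarrow>
        m g h \<in> topspace TG \<and> r (m g h) = r g \<and> s (m g h) = s h) \<and>
     (\<forall>g \<in> topspace TG. \<forall>h \<in> topspace TG. \<forall>k \<in> topspace TG.
        s g = r h \<and> s h = r k \<longrightarrow> m (m g h) k = m g (m h k)) \<and>
     (\<forall>g \<in> topspace TG. m (r g) g = g \<and> m g (s g) = g) \<and>
     (\<forall>g \<in> topspace TG. i g \<in> topspace TG \<and> r (i g) = s g \<and> s (i g) = r g \<and>
        m g (i g) = r g \<and> m (i g) g = s g) \<and>
     continuous_map TG TG r \<and> continuous_map TG TG s \<and> continuous_map TG TG i \<and>
     continuous_map (subtopology (prod_topology TG TG) (composable_pairs TG r s)) TG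
        (\<lambda>(g, h). m g h)"

definition action_pairs :: "'z topology \<Rightarrow> 'g topology \<Rightarrow> ('g \<Rightarrow> 'g) \<Rightarrow> ('z \<Rightarrow> 'g) \<Rightarrow> ('z \<times> 'g) set" where
  "action_pairs TZ TG r p = {(z, g). z \<in> topspace TZ \<and> g \<in> topspace TG \<and> p z = r g}"

definition groupoid_right_action ::
  "'g topology \<Rightarrow> 'g set \<Rightarrow> ('g \<Rightarrow> 'g) \<Rightarrow> ('g \<Rightarrow> 'g) \<Rightarrow> ('g \<Rightarrow> 'g \<Rightarrow> 'g) \<Rightarrow> ('g \<Rightarrow> 'g) \<Rightarrow>
   'z topology \<Rightarrow> ('z \<Rightarrow> 'g) \<Rightarrow> ('z \<Rightarrow> 'g \<Rightarrow> 'z) \<Rightarrow> bool" where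
  "groupoid_right_action TG U r s m i TZ p a \<longleftrightarrow>
     topological_groupoid TG U r s m i \<and>
     continuous_map TZ (subtopology TG U) p \<and>
     (\<forall>z \<in> topspace TZ. \<forall>g \<in> topspace TG. p z = r g \<longrightarrow>
        a z g \<in> topspace TZ \<and> p (a z g) = s g) \<and>
     (\<forall>z \<in> topspace TZ. a z (p z) = z) \<and>
     (\<forall>z \<in> topspace TZ. \<forall>g \<in> topspace TG. \<forall>h \<in> topspace TG.
        p z = r g \<and> s g = r h \<longrightarrow> a (a z g) h = a z (m g h)) \<and>
     continuous_map (subtopology (prod_topology TZ TG) (action_pairs TZ TG r p)) TZ
        (\<lambda>(z, g). a z g)"

text \<open>Proper map in the sense of the paper (closed with quasi-compact fibres) is the
  library's proper_map.\<close>

definition proper_groupoid :: "'a topology \<Rightarrow> 'u topology \<Rightarrow> ('a \<Rightarrow> 'u) \<Rightarrow> ('a \<Rightarrow> 'u) \<Rightarrow> bool" where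
  "proper_groupoid TA TU ra sa \<longleftrightarrow> proper_map TA (prod_topology TU TU) (\<lambda>x. (ra x, sa x))"

text \<open>The transformation groupoid Z \<rtimes> G has arrow space action_pairs (subspace of Z \<times> G),
  unit space Z, range (z,g) \<mapsto> z and source (z,g) \<mapsto> zg.\<close>

definition proper_action ::
  "'g topology \<Rightarrow> ('g \<Rightarrow> 'g) \<Rightarrow> 'z topology \<Rightarrow> ('z \<Rightarrow> 'g) \<Rightarrow> ('z \<Rightarrow> 'g \<Rightarrow> 'z) \<Rightarrow> bool" where
  "proper_action TG r TZ p a \<longleftrightarrow>
     proper_groupoid (subtopology (prod_topology TZ TG) (action_pairs TZ TG r p)) TZ
       (\<lambda>(z, g). z) (\<lambda>(z, g). a z g)"

definition act_set :: "('g \<Rightarrow> 'g) \<Rightarrow> ('z \<Rightarrow> 'g) \<Rightarrow> ('z \<Rightarrow> 'g \<Rightarrow> 'z) \<Rightarrow> 'z set \<Rightarrow> 'g \<Rightarrow> 'z set" where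
  "act_set r p a L g = {a z g | z. z \<in> L \<and> p z = r g}"

definition transporter :: "'g topology \<Rightarrow> ('g \<Rightarrow> 'g) \<Rightarrow> ('z \<Rightarrow> 'g) \<Rightarrow> ('z \<Rightarrow> 'g \<Rightarrow> 'z) \<Rightarrow>
    'z set \<Rightarrow> 'z set \<Rightarrow> 'g set" where
  "transporter TG r p a L K = {g \<in> topspace TG. act_set r p a L g \<inter> K \<noteq> {}}"

definition stabilizer :: "'g topology \<Rightarrow> ('g \<Rightarrow> 'g) \<Rightarrow> ('z \<Rightarrow> 'g) \<Rightarrow> ('z \<Rightarrow> 'g \<Rightarrow> 'z) \<Rightarrow> 'z \<Rightarrow> 'g set" where
  "stabilizer TG r p a z = {g \<in> topspace TG. p z = r g \<and> a z g = z}"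

text \<open>Quasi-compact = library compactin (no separation). Compact = quasi-compact Hausdorff.\<close>

definition compact_subset :: "'a topology \<Rightarrow> 'a set \<Rightarrow> bool" where
  "compact_subset X K \<longleftrightarrow> compactin X K \<and> Hausdorff_space (subtopology X K)"

definition rel_quasi_compact :: "'a topology \<Rightarrow> 'a set \<Rightarrow> bool" where
  "rel_quasi_compact X S \<longleftrightarrow> (\<exists>C. compactin X C \<and> S \<subseteq> C)"

definition locally_compact_paper :: "'a topology \<Rightarrow> bool" where
  "locally_compact_paper X \<longleftrightarrow>
     (\<forall>x \<in> topspace X. \<exists>U K. openin X U \<and> x \<in> U \<and> U \<subseteq> K \<and> compact_subset X K)"

end

theory Submission
  imports Defs
begin

locale gra =
  fixes TG :: "'g topology" and U :: "'g set" and r s :: "'g \<Rightarrow> 'g"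
    and m :: "'g \<Rightarrow> 'g \<Rightarrow> 'g" and i :: "'g \<Rightarrow> 'g"
    and TZ :: "'z topology" and p :: "'z \<Rightarrow> 'g" and a :: "'z \<Rightarrow> 'g \<Rightarrow> 'z"
  assumes act: "groupoid_right_action TG U r s m i TZ p a"
begin

abbreviation "AP \<equiv> action_pairs TZ TG r p"
abbreviation "XA \<equiv> subtopology (prod_topology TZ TG) AP"
definition phi :: "'z \<times> 'g \<Rightarrow> 'z \<times> 'z" where "phi = (\<lambda>(z, g). (z, a z g))"

lemma G: "topological_groupoid TG U r s m i" using act unfolding groupoid_right_action_def by blast

lemma rU: "g \<in> topspace TG \<Longrightarrow> r g \<in> U" and sU: "g \<in> topspace TG \<Longrightarrow> s g \<in> U"
  using G unfolding topological_groupoid_def by blast+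
lemma m_top: "g \<in> topspace TG \<Longrightarrow> h \<in> topspace TG \<Longrightarrow> s g = r h \<Longrightarrow> m g h \<in> topspace TG \<and> r (m g h) = r g \<and> s (m g h) = s h"
  using G unfolding topological_groupoid_def by blast
lemma m_assoc: "g \<in> topspace TG \<Longrightarrow> h \<in> topspace TG \<Longrightarrow> k \<in> topspace TG \<Longrightarrow> s g = r h \<Longrightarrow> s h = r k \<Longrightarrow> m (m g h) k = m g (m h k)"
  using G unfolding topological_groupoid_def by blast
lemma m_unit: "g \<in> topspace TG \<Longrightarrow> m (r g) g = g \<and> m g (s g) = g"
  using G unfolding topological_groupoid_def by blast
lemma inv_ax: "g \<in> topspace TG \<Longrightarrow> i g \<in> topspace TG \<and> r (i g) = s g \<and> s (i g) = r g \<and> m g (i g) = r g \<and> m (i g) g = s g"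
  using G unfolding topological_groupoid_def by blast
lemma r_cont: "continuous_map TG TG r"
  using G unfolding topological_groupoid_def by blast
lemma m_cont: "continuous_map (subtopology (prod_topology TG TG) (composable_pairs TG r s)) TG (\<lambda>(g, h). m g h)"
  using G unfolding topological_groupoid_def by blast

lemma p_cont: "continuous_map TZ (subtopology TG U) p"
  using act unfolding groupoid_right_action_def by blast
lemma a_top: "z \<in> topspace TZ \<Longrightarrow> g \<in> topspace TG \<Longrightarrow> p z = r g \<Longrightarrow> a z g \<in> topspace TZ \<and> p (a z g) = s g"
  using act unfolding groupoid_right_action_def by blast
lemma a_unit: "z \<in> topspace TZ \<Longrightarrow> a z (p z) = z"
  using act unfolding groupoid_right_action_def by blast
lemma a_assoc: "z \<in> topspace TZ \<Longrightarrow> g \<in> topspace TG \<Longrightarrow> h \<in> topspace TG \<Longrightarrow> p z = r g \<Longrightarrow> s g = r h \<Longrightarrow> a (a z g) h = a z (m g h)"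
  using act unfolding groupoid_right_action_def by blast
lemma a_cont: "continuous_map XA TZ (\<lambda>(z, g). a z g)"
  using act unfolding groupoid_right_action_def by blast

lemma pU: "z \<in> topspace TZ \<Longrightarrow> p z \<in> U"
  using p_cont unfolding continuous_map_def by auto

lemma topspace_XA: "topspace XA = AP"
  by (auto simp: action_pairs_def)

lemma phi_cont: "continuous_map XA (prod_topology TZ TZ) phi"
proof -
  have "continuous_map XA TZ fst"
    by (intro continuous_map_from_subtopology continuous_map_fst)
  moreover have "fst \<circ> phi = fst" "snd \<circ> phi = (\<lambda>(z, g). a z g)"
    by (auto simp: phi_def)
  ultimately show ?thesis using a_cont by (simp add: continuous_map_pairwise)
qed

lemma c1_eq: "proper_action TG r TZ p a \<longleftrightarrow> proper_map XA (prod_topology TZ TZ) phi"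
proof -
  have "(\<lambda>x. ((\<lambda>(z, g). z) x, (\<lambda>(z, g). a z g) x)) = phi"
    by (auto simp: phi_def)
  then show ?thesis unfolding proper_action_def proper_groupoid_def by simp
qed

lemma pair_cont:
  assumes "z \<in> topspace TZ" and "\<And>g. g \<in> S \<Longrightarrow> g \<in> topspace TG \<and> p z = r g"
  shows "continuous_map (subtopology TG S) XA (\<lambda>g. (z, g))"
proof -
  have "continuous_map (subtopology TG S) (prod_topology TZ TG) (\<lambda>g. (z, g))"
    using assms(1) by (simp add: continuous_map_pairwise o_def continuous_map_from_subtopology)
  moreover have "(\<lambda>g. (z, g)) ` topspace (subtopology TG S) \<subseteq> AP"
    using assms by (auto simp: action_pairs_def)
  ultimately show ?thesis by (metis continuous_map_into_subtopology image_subset_iff_funcset)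
qed

lemma stab_eq: "z \<in> topspace TZ \<Longrightarrow> stabilizer TG r p a z = snd ` {x \<in> topspace XA. phi x = (z, z)}"
  unfolding stabilizer_def topspace_XA
  by (force simp: action_pairs_def phi_def image_iff)

lemma snd_cont: "continuous_map XA TG snd"
  by (intro continuous_map_from_subtopology continuous_map_snd)

lemma c1_c2: "proper_map XA (prod_topology TZ TZ) phi \<Longrightarrow> \<forall>z \<in> topspace TZ. compactin TG (stabilizer TG r p a z)"
proof
  fix z assume pm: "proper_map XA (prod_topology TZ TZ) phi" and z: "z \<in> topspace TZ"
  then have "compactin XA {x \<in> topspace XA. phi x = (z, z)}"
    unfolding proper_map_def by auto
  from image_compactin[OF this snd_cont]
  show "compactin TG (stabilizer TG r p a z)" by (simp only: stab_eq[OF z])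
qed


lemma mult_right_cont:
  assumes g0: "g0 \<in> topspace TG" and S: "\<And>h. h \<in> S \<Longrightarrow> h \<in> topspace TG \<and> s h = r g0"
  shows "continuous_map (subtopology TG S) TG (\<lambda>h. m h g0)"
proof -
  have "continuous_map (subtopology TG S) (prod_topology TG TG) (\<lambda>h. (h, g0))"
    using g0 by (simp add: continuous_map_pairwise o_def continuous_map_from_subtopology)
  moreover have "(\<lambda>h. (h, g0)) ` topspace (subtopology TG S) \<subseteq> composable_pairs TG r s"
    using S g0 by (auto simp: composable_pairs_def)
  ultimately have "continuous_map (subtopology TG S) (subtopology (prod_topology TG TG) (composable_pairs TG r s)) (\<lambda>h. (h, g0))"
    by (metis continuous_map_into_subtopology image_subset_iff_funcset)
  from continuous_map_compose[OF this m_cont] show ?thesis by (simp add: o_def)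
qed

lemma c2_c1:
  assumes cl: "closed_map XA (prod_topology TZ TZ) phi"
    and st: "\<forall>z \<in> topspace TZ. compactin TG (stabilizer TG r p a z)"
  shows "proper_map XA (prod_topology TZ TZ) phi"
  unfolding proper_map_def
proof (intro conjI cl ballI)
  fix y assume y: "y \<in> topspace (prod_topology TZ TZ)"
  obtain z w where yzw: "y = (z, w)" by force
  with y have z: "z \<in> topspace TZ" and w: "w \<in> topspace TZ" by auto
  define Fib where "Fib = {x \<in> topspace XA. phi x = y}"
  show "compactin XA {x \<in> topspace XA. phi x = y}"
  proof (cases "Fib = {}")
    case True then show ?thesis unfolding Fib_def by (metis compactin_empty)
  next
    case False
    then obtain x0 where "x0 \<in> Fib" by blast
    then obtain g0 where g0: "g0 \<in> topspace TG" "p z = r g0" "a z g0 = w"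
      unfolding Fib_def topspace_XA yzw by (auto simp: action_pairs_def phi_def)
    define St where "St = stabilizer TG r p a z"
    have Sth: "h \<in> topspace TG \<and> s h = r g0" if "h \<in> St" for h
    proof -
      have h: "h \<in> topspace TG" "p z = r h" "a z h = z" using that by (auto simp: St_def stabilizer_def)
      then have "s h = p z" using a_top[OF z h(1) h(2)] by simp
      with h g0 show ?thesis by simp
    qed
    define f where "f = (\<lambda>h. (z, m h g0))"
    have fc: "continuous_map (subtopology TG St) XA f"
    proof -
      have "continuous_map (subtopology TG St) (prod_topology TZ TG) f"
        using z mult_right_cont[OF g0(1) Sth]
        by (simp add: f_def continuous_map_pairwise o_def)
      moreover have "f ` topspace (subtopology TG St) \<subseteq> AP"
      proof
        fix x assume "x \<in> f ` topspace (subtopology TG St)"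
        then obtain h where h: "h \<in> St" "x = f h" by auto
        with Sth have "h \<in> topspace TG" "s h = r g0" by auto
        moreover have "p z = r h" using h by (auto simp: St_def stabilizer_def)
        ultimately show "x \<in> AP" using m_top[of h g0] g0 z h(2) by (auto simp: f_def action_pairs_def)
      qed
      ultimately show ?thesis by (metis continuous_map_into_subtopology image_subset_iff_funcset)
    qed
    have cSt: "compactin (subtopology TG St) St"
      using st z by (simp add: compactin_subtopology St_def)
    have "Fib = f ` St"
    proof
      show "f ` St \<subseteq> Fib"
      proof
        fix x assume "x \<in> f ` St"
        then obtain h where h: "h \<in> St" "x = f h" by auto
        with Sth have hh: "h \<in> topspace TG" "s h = r g0" by auto
        have hz: "p z = r h" "a z h = z" using h by (auto simp: St_def stabilizer_def)
        have "x \<in> topspace XA" using fc h continuous_map_image_subset_topspace[OF fc]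
          by (force simp: St_def stabilizer_def)
        moreover have "a z (m h g0) = w"
          using a_assoc[OF z hh(1) g0(1) hz(1) hh(2)] hz g0 by simp
        ultimately show "x \<in> Fib" unfolding Fib_def using h(2) yzw by (simp add: f_def phi_def)
      qed
    next
      show "Fib \<subseteq> f ` St"
      proof
        fix x assume "x \<in> Fib"
        then obtain g where x: "x = (z, g)" and g: "g \<in> topspace TG" "p z = r g" "a z g = w"
          unfolding Fib_def topspace_XA yzw by (auto simp: action_pairs_def phi_def)
        have sg: "s g = s g0" using a_top[OF z g(1) g(2)] a_top[OF z g0(1) g0(2)] g g0 by simp
        obtain j0 where j0: "j0 = i g0" by simp
        have j: "j0 \<in> topspace TG" "r j0 = s g0" "s j0 = r g0" "m g0 j0 = r g0" "m j0 g0 = s g0"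
          using inv_ax[OF g0(1)] j0 by auto
        define h where "h = m g j0"
        have hprops: "h \<in> topspace TG" "r h = r g" "s h = s j0"
          using m_top[OF g(1) j(1)] sg j by (auto simp: h_def)
        have "a z h = a (a z g) j0" using a_assoc[OF z g(1) j(1) g(2)] sg j by (simp add: h_def)
        also have "\<dots> = a (a z g0) j0" using g g0 by simp
        also have "\<dots> = a z (m g0 j0)" using a_assoc[OF z g0(1) j(1) g0(2)] j by simp
        also have "\<dots> = z" using j g0 a_unit[OF z] by simp
        finally have ahz: "a z h = z" .
        have hSt: "h \<in> St" using hprops ahz g by (simp add: St_def stabilizer_def)
        have "m h g0 = m g (m j0 g0)" using m_assoc[OF g(1) j(1) g0(1)] sg j by (simp add: h_def)
        also have "\<dots> = g" using j sg m_unit[OF g(1)] by simp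
        finally show "x \<in> f ` St" using hSt x by (auto simp: f_def image_iff intro!: bexI[of _ h])
      qed
    qed
    then show ?thesis unfolding Fib_def[symmetric] using image_compactin[OF cSt fc] by simp
  qed
qed

lemma transporter_eq: "transporter TG r p a L K = snd ` {x \<in> topspace XA. phi x \<in> L \<times> K}" if "L \<subseteq> topspace TZ"
  using that unfolding transporter_def act_set_def topspace_XA
  by (force simp: action_pairs_def phi_def image_iff)

lemma proper_transporter:
  assumes pm: "proper_map XA (prod_topology TZ TZ) phi" and K: "compactin TZ K" and L: "compactin TZ L"
  shows "compactin TG (transporter TG r p a L K)"
proof -
  have "compactin (prod_topology TZ TZ) (L \<times> K)" using K L by (simp add: compactin_Times)
  from compactin_proper_map_preimage[OF pm this]
  have "compactin XA {x \<in> topspace XA. phi x \<in> L \<times> K}" by simp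
  note img = image_compactin[OF this snd_cont]
  have Ls: "L \<subseteq> topspace TZ" using L compactin_subset_topspace by blast
  show ?thesis using img by (simp only: transporter_eq[OF Ls])
qed

lemma transporter_mono: "L \<subseteq> L' \<Longrightarrow> K \<subseteq> K' \<Longrightarrow> transporter TG r p a L K \<subseteq> transporter TG r p a L' K'"
  unfolding transporter_def act_set_def by blast


lemma U_sub: "U \<subseteq> topspace TG" using G unfolding topological_groupoid_def by blast

lemma rc: "continuous_map TG (subtopology TG U) r"
  using r_cont rU by (metis continuous_map_into_subtopology Pi_I)

lemma c5_c2:
  assumes HU: "Hausdorff_space (subtopology TG U)" and LC: "locally_compact_paper TZ"
    and HZ: "Hausdorff_space TZ"
    and fam: "\<forall>A \<in> \<A>. A \<subseteq> topspace TZ" "topspace TZ = (\<Union>A \<in> \<A>. TZ interior_of A)"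
      "\<forall>A \<in> \<A>. \<forall>B \<in> \<A>. rel_quasi_compact TG (transporter TG r p a A B)"
  shows "closed_map XA (prod_topology TZ TZ) phi \<and> (\<forall>z \<in> topspace TZ. compactin TG (stabilizer TG r p a z))"
proof (intro conjI ballI)
  fix z assume z: "z \<in> topspace TZ"
  then obtain A where A: "A \<in> \<A>" "z \<in> TZ interior_of A" using fam(2) by blast
  then have zA: "z \<in> A" using interior_of_subset by fast
  obtain C where C: "compactin TG C" "transporter TG r p a A A \<subseteq> C"
    using fam(3) A(1) unfolding rel_quasi_compact_def by blast
  define St where "St = stabilizer TG r p a z"
  have StC: "St \<subseteq> C"
  proof
    fix g assume "g \<in> St"
    then have g: "g \<in> topspace TG" "p z = r g" "a z g = z" by (auto simp: St_def stabilizer_def)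
    then have "a z g \<in> act_set r p a A g" using zA unfolding act_set_def by blast
    then have "g \<in> transporter TG r p a A A" using g zA unfolding transporter_def by auto
    then show "g \<in> C" using C by blast
  qed
  define R where "R = {g \<in> topspace TG. r g \<in> {p z}}"
  have "p z \<in> topspace (subtopology TG U)" using pU[OF z] U_sub by auto
  then have Rc: "closedin TG R" unfolding R_def
    by (intro closedin_continuous_map_preimage[OF rc] closedin_Hausdorff_singleton[OF HU])
  have ac: "continuous_map (subtopology TG R) TZ (a z)"
  proof -
    have "continuous_map (subtopology TG R) XA (Pair z)"
      by (rule pair_cont[OF z]) (auto simp: R_def)
    from continuous_map_compose[OF this a_cont] show ?thesis by (simp add: o_def)
  qed
  have "closedin (subtopology TG R) {g \<in> topspace (subtopology TG R). a z g \<in> {z}}"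
    by (intro closedin_continuous_map_preimage[OF ac] closedin_Hausdorff_singleton[OF HZ z])
  moreover have "{g \<in> topspace (subtopology TG R). a z g \<in> {z}} = St"
    by (auto simp: St_def stabilizer_def R_def)
  ultimately have "closedin TG St" using Rc closedin_trans_full by metis
  then show "compactin TG (stabilizer TG r p a z)"
    using closed_compactin[OF C(1) StC] St_def by simp
next
  show "closed_map XA (prod_topology TZ TZ) phi"
    unfolding closed_map_def
  proof (intro allI impI)
    fix F assume F: "closedin XA F"
    have FAP: "F \<subseteq> AP" using closedin_subset[OF F] topspace_XA by simp
    have "closedin (prod_topology TZ TG) {x \<in> topspace (prod_topology TZ TG). (p \<circ> fst) x = (r \<circ> snd) x}"
      by (intro closedin_continuous_maps_eq[OF HU] continuous_map_compose[OF continuous_map_fst p_cont]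
          continuous_map_compose[OF continuous_map_snd rc])
    moreover have "{x \<in> topspace (prod_topology TZ TG). (p \<circ> fst) x = (r \<circ> snd) x} = AP"
      by (auto simp: action_pairs_def)
    ultimately have APc: "closedin (prod_topology TZ TG) AP" by simp
    have Fc: "closedin (prod_topology TZ TG) F" using closedin_trans_full[OF F APc] .
    have HZZ: "Hausdorff_space (prod_topology TZ TZ)" using HZ Hausdorff_space_prod_topology by blast
    have sub: "phi ` F \<subseteq> topspace (prod_topology TZ TZ)"
      using continuous_map_image_subset_topspace[OF phi_cont] closedin_subset[OF F] by blast
    have "openin (prod_topology TZ TZ) (topspace (prod_topology TZ TZ) - phi ` F)"
    proof (subst openin_subopen, intro ballI)
      fix y assume y: "y \<in> topspace (prod_topology TZ TZ) - phi ` F"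
      obtain z w where yzw: "y = (z, w)" by force
      with y have z: "z \<in> topspace TZ" and w: "w \<in> topspace TZ" by auto
      obtain A where A: "A \<in> \<A>" "z \<in> TZ interior_of A" using fam(2) z by blast
      obtain B where B: "B \<in> \<A>" "w \<in> TZ interior_of B" using fam(2) w by blast
      obtain C where C: "compactin TG C" "transporter TG r p a A B \<subseteq> C"
        using fam(3) A(1) B(1) unfolding rel_quasi_compact_def by blast
      obtain V K where VK: "openin TZ V" "z \<in> V" "V \<subseteq> K" "compact_subset TZ K"
        using LC z unfolding locally_compact_paper_def by blast
      have K: "compactin TZ K" using VK(4) compact_subset_def by blast
      define S where "S = phi ` (F \<inter> (K \<times> C))"
      have KC: "compactin (prod_topology TZ TG) (K \<times> C)" using K C(1) by (simp add: compactin_Times)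
      have "compactin (subtopology (prod_topology TZ TG) (K \<times> C)) (K \<times> C)"
        using KC by (simp add: compactin_subtopology)
      moreover have "closedin (subtopology (prod_topology TZ TG) (K \<times> C)) (F \<inter> (K \<times> C))"
        using Fc closedin_subtopology by blast
      ultimately have "compactin (subtopology (prod_topology TZ TG) (K \<times> C)) (F \<inter> (K \<times> C))"
        by (meson closed_compactin inf_le2)
      then have "compactin XA (F \<inter> (K \<times> C))" using FAP by (auto simp: compactin_subtopology)
      from image_compactin[OF this phi_cont]
      have Sc: "closedin (prod_topology TZ TZ) S" unfolding S_def
        using compactin_imp_closedin[OF HZZ] by blast
      define T where "T = (V \<inter> TZ interior_of A) \<times> (TZ interior_of B) - S"
      have "openin (prod_topology TZ TZ) ((V \<inter> TZ interior_of A) \<times> (TZ interior_of B))"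
        using VK(1) by (simp add: openin_prod_Times_iff openin_Int openin_interior_of)
      then have To: "openin (prod_topology TZ TZ) T" unfolding T_def using Sc by blast
      have yT: "y \<in> T" using y yzw A B VK unfolding T_def S_def by auto
      have "T \<subseteq> topspace (prod_topology TZ TZ) - phi ` F"
      proof
        fix t assume t: "t \<in> T"
        then obtain z' w' where t': "t = (z', w')" "z' \<in> V" "z' \<in> TZ interior_of A" "w' \<in> TZ interior_of B" "t \<notin> S"
          unfolding T_def by auto
        have "t \<in> topspace (prod_topology TZ TZ)" using t' interior_of_subset_topspace by fastforce
        moreover have "t \<notin> phi ` F"
        proof
          assume "t \<in> phi ` F"
          then obtain x where x: "x \<in> F" "t = phi x" by blast
          obtain z'' g where xg: "x = (z'', g)" by force
          have g: "z'' = z'" "a z' g = w'" "g \<in> topspace TG" "p z' = r g" "z' \<in> topspace TZ"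
            using x xg t' FAP by (auto simp: phi_def action_pairs_def)
          have "z' \<in> A" "w' \<in> B" using t' interior_of_subset by fast+
          then have "g \<in> transporter TG r p a A B"
            using g unfolding transporter_def act_set_def by blast
          then have "g \<in> C" using C by blast
          then have "x \<in> F \<inter> (K \<times> C)" using x xg g t' VK by auto
          then show False using x t' unfolding S_def by blast
        qed
        ultimately show "t \<in> topspace (prod_topology TZ TZ) - phi ` F" by blast
      qed
      then show "\<exists>T. openin (prod_topology TZ TZ) T \<and> y \<in> T \<and> T \<subseteq> topspace (prod_topology TZ TZ) - phi ` F"
        using To yT by blast
    qed
    then show "closedin (prod_topology TZ TZ) (phi ` F)" using sub closedin_def by blast
  qed
qed

end

theorem proposition2p14:
  fixes TG :: "'g topology" and U :: "'g set" and r s :: "'g \<Rightarrow> 'g"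
    and m :: "'g \<Rightarrow> 'g \<Rightarrow> 'g" and i :: "'g \<Rightarrow> 'g"
    and TZ :: "'z topology" and p :: "'z \<Rightarrow> 'g" and a :: "'z \<Rightarrow> 'g \<Rightarrow> 'z"
  assumes act: "groupoid_right_action TG U r s m i TZ p a"
  defines "c1 \<equiv> proper_action TG r TZ p a"
    and "c2 \<equiv> closed_map (subtopology (prod_topology TZ TG) (action_pairs TZ TG r p))
                  (prod_topology TZ TZ) (\<lambda>(z, g). (z, a z g))
              \<and> (\<forall>z \<in> topspace TZ. compactin TG (stabilizer TG r p a z))"
    and "c3 \<equiv> \<forall>K L. compactin TZ K \<and> compactin TZ L \<longrightarrow> compactin TG (transporter TG r p a L K)"
    and "c3' \<equiv> \<forall>K L. compact_subset TZ K \<and> compact_subset TZ L \<longrightarrow>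
                 compactin TG (transporter TG r p a L K)"
    and "c4 \<equiv> \<forall>K. compactin TZ K \<longrightarrow> compactin TG (transporter TG r p a K K)"
    and "c5 \<equiv> \<exists>\<A>. (\<forall>A \<in> \<A>. A \<subseteq> topspace TZ) \<and>
                topspace TZ = (\<Union>A \<in> \<A>. TZ interior_of A) \<and>
                (\<forall>A \<in> \<A>. \<forall>B \<in> \<A>. rel_quasi_compact TG (transporter TG r p a A B))"
  shows "(c1 \<longleftrightarrow> c2) \<and> (c2 \<longrightarrow> c3) \<and> (c3 \<longrightarrow> c3') \<and> (c3 \<longrightarrow> c4)
       \<and> (locally_compact_paper TZ \<longrightarrow> (c3' \<longrightarrow> c5) \<and> (c4 \<longrightarrow> c5))
       \<and> (Hausdorff_space (subtopology TG U) \<and> locally_compact_paper TZ \<and> Hausdorff_space TZ \<longrightarrow>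
            (c1 \<longleftrightarrow> c2) \<and> (c1 \<longleftrightarrow> c3) \<and> (c1 \<longleftrightarrow> c3') \<and> (c1 \<longleftrightarrow> c4) \<and> (c1 \<longleftrightarrow> c5))"
proof -
  interpret gra TG U r s m i TZ p a by (rule gra.intro[OF act])
  have phi_eq: "(\<lambda>(z, g). (z, a z g)) = phi" by (simp add: phi_def)
  have e12: "c1 \<longleftrightarrow> c2"
  proof
    assume c1
    then have "proper_map XA (prod_topology TZ TZ) phi" unfolding c1_def c1_eq .
    then show c2 unfolding c2_def phi_eq using c1_c2 proper_imp_closed_map by simp
  next
    assume c2
    then show c1 unfolding c1_def c1_eq unfolding c2_def phi_eq using c2_c1 by simp
  qed
  have pm2: "c2 \<Longrightarrow> proper_map XA (prod_topology TZ TZ) phi"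
    using e12 c1_eq unfolding c1_def by blast
  have e23: "c2 \<longrightarrow> c3" unfolding c3_def using pm2 proper_transporter by blast
  have e33: "c3 \<longrightarrow> c3'" unfolding c3_def c3'_def compact_subset_def by blast
  have e34: "c3 \<longrightarrow> c4" unfolding c3_def c4_def by blast
  have cover: "topspace TZ = (\<Union>A \<in> {K. compact_subset TZ K}. TZ interior_of A)"
    if LC: "locally_compact_paper TZ"
  proof
    show "topspace TZ \<subseteq> (\<Union>A \<in> {K. compact_subset TZ K}. TZ interior_of A)"
    proof
      fix z assume "z \<in> topspace TZ"
      then obtain V K where VK: "openin TZ V" "z \<in> V" "V \<subseteq> K" "compact_subset TZ K"
        using LC unfolding locally_compact_paper_def by blast
      then have "z \<in> TZ interior_of K" using interior_of_maximal by blast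
      then show "z \<in> (\<Union>A \<in> {K. compact_subset TZ K}. TZ interior_of A)" using VK by blast
    qed
  next
    show "(\<Union>A \<in> {K. compact_subset TZ K}. TZ interior_of A) \<subseteq> topspace TZ"
      by (simp add: UN_least interior_of_subset_topspace)
  qed
  have e35: "c3' \<longrightarrow> c5" if LC: "locally_compact_paper TZ"
  proof
    assume h: c3'
    show c5 unfolding c5_def
    proof (intro exI[of _ "{K. compact_subset TZ K}"] conjI)
      show "\<forall>A \<in> {K. compact_subset TZ K}. A \<subseteq> topspace TZ"
        by (auto simp: compact_subset_def dest: compactin_subset_topspace)
      show "topspace TZ = (\<Union>A \<in> {K. compact_subset TZ K}. TZ interior_of A)" using cover[OF LC] .
      show "\<forall>A \<in> {K. compact_subset TZ K}. \<forall>B \<in> {K. compact_subset TZ K}. rel_quasi_compact TG (transporter TG r p a A B)"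
        using h unfolding c3'_def rel_quasi_compact_def by blast
    qed
  qed
  have e45: "c4 \<longrightarrow> c5" if LC: "locally_compact_paper TZ"
  proof
    assume h: c4
    show c5 unfolding c5_def
    proof (intro exI[of _ "{K. compactin TZ K}"] conjI)
      show "\<forall>A \<in> {K. compactin TZ K}. A \<subseteq> topspace TZ"
        by (auto dest: compactin_subset_topspace)
      have "(\<Union>A \<in> {K. compact_subset TZ K}. TZ interior_of A) \<subseteq> (\<Union>A \<in> {K. compactin TZ K}. TZ interior_of A)"
        by (auto simp: compact_subset_def)
      then have "topspace TZ \<subseteq> (\<Union>A \<in> {K. compactin TZ K}. TZ interior_of A)"
        using cover[OF LC] by simp
      moreover have "(\<Union>A \<in> {K. compactin TZ K}. TZ interior_of A) \<subseteq> topspace TZ"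
        by (simp add: UN_least interior_of_subset_topspace)
      ultimately show "topspace TZ = (\<Union>A \<in> {K. compactin TZ K}. TZ interior_of A)"
        by (rule antisym)
      show "\<forall>A \<in> {K. compactin TZ K}. \<forall>B \<in> {K. compactin TZ K}. rel_quasi_compact TG (transporter TG r p a A B)"
      proof (intro ballI)
        fix A B assume "A \<in> {K. compactin TZ K}" "B \<in> {K. compactin TZ K}"
        then have "compactin TZ (A \<union> B)" by (simp add: compactin_Un)
        then have "compactin TG (transporter TG r p a (A \<union> B) (A \<union> B))" using h unfolding c4_def by blast
        moreover have "transporter TG r p a A B \<subseteq> transporter TG r p a (A \<union> B) (A \<union> B)"
          by (rule transporter_mono) auto
        ultimately show "rel_quasi_compact TG (transporter TG r p a A B)"
          unfolding rel_quasi_compact_def by blast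
      qed
    qed
  qed
  have e52: "c5 \<longrightarrow> c2" if "Hausdorff_space (subtopology TG U)" "locally_compact_paper TZ" "Hausdorff_space TZ"
  proof
    assume c5
    then obtain \<A> where fam: "(\<forall>A \<in> \<A>. A \<subseteq> topspace TZ) \<and> topspace TZ = (\<Union>A \<in> \<A>. TZ interior_of A) \<and>
      (\<forall>A \<in> \<A>. \<forall>B \<in> \<A>. rel_quasi_compact TG (transporter TG r p a A B))"
      unfolding c5_def by (rule exE)
    show c2 using c5_c2[OF that conjunct1[OF fam] conjunct1[OF conjunct2[OF fam]] conjunct2[OF conjunct2[OF fam]]]
      unfolding c2_def phi_eq .
  qed
  show ?thesis using e12 e23 e33 e34 e35 e45 e52 by argo
qed

end
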